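(* Let $k$ be a commutative ring with unit and $A=k[t_1,\ldots,t_r]$ graded with each $t_i$ of degree $2$. Let $M$ be a graded $A$-module, bounded from below, with $\operatorname{Tor}^A_1(M,k)=0$. Let $S\subset A$ be the multiplicative subset generated by those elements of $A^2$ which can be extended to a basis of the $k$-module $A^2$. Then the localisation map $M\to S^{-1}M$ is injective.
   Context: $A^2$ is the degree-$2$ part of $A$, i.e. the free $k$-module with basis $t_1,\ldots,t_r$; its elements are called linear. $k$ is an $A$-module via the augmentation sending each $t_i$ to $0$. *)

theory Defs
  imports "HOL-Library.Poly_Mapping"
begin

text \<open>The polynomial ring A = k[t_i | i :: 'i] (with 'i finite, r = CARD('i)),
  realised as finitely supported maps from monomials (exponent vectors) to coefficients.\<close>
type_synonym ('i, 'k) mpoly = "('i \<Rightarrow>\<^sub>0 nat) \<Rightarrow>\<^sub>0 'k"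

definition var :: "'i \<Rightarrow> ('i, 'k::comm_ring_1) mpoly" where
  "var i = Poly_Mapping.single (Poly_Mapping.single i 1) 1"

definition const :: "'k::comm_ring_1 \<Rightarrow> ('i, 'k) mpoly" where
  "const c = Poly_Mapping.single 0 c"

text \<open>Total degree of a monomial; t_i has degree 2, so the monomial mu has degree 2 * mdeg mu.\<close>
definition mdeg :: "('i::finite \<Rightarrow>\<^sub>0 nat) \<Rightarrow> nat" where
  "mdeg mu = (\<Sum>i\<in>UNIV. Poly_Mapping.lookup mu i)"

text \<open>Elements of A^2 (linear elements): k-linear combinations of the t_i.\<close>
definition linear_elem :: "('i, 'k::comm_ring_1) mpoly \<Rightarrow> bool" where
  "linear_elem p \<longleftrightarrow> (\<forall>mu. Poly_Mapping.lookup p mu \<noteq> 0 \<longrightarrow> (\<exists>i. mu = Poly_Mapping.single i 1))"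

definition is_basis_A2 :: "('i, 'k::comm_ring_1) mpoly set \<Rightarrow> bool" where
  "is_basis_A2 B \<longleftrightarrow> B \<subseteq> {p. linear_elem p} \<and>
     (\<forall>p. linear_elem p \<longrightarrow>
        (\<exists>!c :: ('i, 'k) mpoly \<Rightarrow> 'k. {b. c b \<noteq> 0} \<subseteq> B \<and> finite {b. c b \<noteq> 0} \<and>
              p = (\<Sum>b\<in>{b. c b \<noteq> 0}. const (c b) * b)))"

definition extends_to_basis :: "('i, 'k::comm_ring_1) mpoly \<Rightarrow> bool" where
  "extends_to_basis l \<longleftrightarrow> linear_elem l \<and> (\<exists>B. is_basis_A2 B \<and> l \<in> B)"

definition S_set :: "('i, 'k::comm_ring_1) mpoly set" where
  "S_set = {prod_list ls | ls. set ls \<subseteq> {l. extends_to_basis l}}"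

definition is_module :: "(('i, 'k::comm_ring_1) mpoly \<Rightarrow> 'm::ab_group_add \<Rightarrow> 'm) \<Rightarrow> bool" where
  "is_module sm \<longleftrightarrow>
     (\<forall>a b m. sm (a + b) m = sm a m + sm b m) \<and>
     (\<forall>a m n. sm a (m + n) = sm a m + sm a n) \<and>
     (\<forall>a b m. sm (a * b) m = sm a (sm b m)) \<and>
     (\<forall>m. sm 1 m = m)"

definition is_graded_module ::
  "(('i::finite, 'k::comm_ring_1) mpoly \<Rightarrow> 'm::ab_group_add \<Rightarrow> 'm) \<Rightarrow> (int \<Rightarrow> 'm set) \<Rightarrow> bool" where
  "is_graded_module sm Md \<longleftrightarrow>
     is_module sm \<and>
     (\<forall>n. 0 \<in> Md n \<and> (\<forall>x\<in>Md n. \<forall>y\<in>Md n. x - y \<in> Md n)) \<and>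
     (\<forall>m. \<exists>!f :: int \<Rightarrow> 'm. finite {n. f n \<noteq> 0} \<and> (\<forall>n. f n \<in> Md n) \<and>
            m = (\<Sum>n\<in>{n. f n \<noteq> 0}. f n)) \<and>
     (\<forall>mu c n x. x \<in> Md n \<longrightarrow>
            sm (Poly_Mapping.single mu c) x \<in> Md (n + 2 * int (mdeg mu)))"

definition bounded_below :: "(int \<Rightarrow> 'm::zero set) \<Rightarrow> bool" where
  "bounded_below Md \<longleftrightarrow> (\<exists>n0. \<forall>n<n0. Md n = {0})"

text \<open>Tor^A_1(M,k) computed as H_1 of M tensored with the Koszul resolution K(t_1..t_r) of k:
  M \<otimes>_A K_1 = M^r, M \<otimes>_A K_2 = M \<otimes> \<Lambda>^2 A^r, with
  d_1(m) = \<Sum>_i t_i m_i and d_2(m \<otimes> e_j \<and> e_i) = t_j m e_i - t_i m e_j.\<close>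
definition koszul_cycles1 :: "(('i::finite, 'k::comm_ring_1) mpoly \<Rightarrow> 'm::ab_group_add \<Rightarrow> 'm) \<Rightarrow> ('i \<Rightarrow> 'm) set" where
  "koszul_cycles1 sm = {m. (\<Sum>i\<in>UNIV. sm (var i) (m i)) = 0}"

definition koszul_boundaries1 :: "(('i::finite, 'k::comm_ring_1) mpoly \<Rightarrow> 'm::ab_group_add \<Rightarrow> 'm) \<Rightarrow> ('i \<Rightarrow> 'm) set" where
  "koszul_boundaries1 sm =
     {(\<lambda>i. \<Sum>j\<in>UNIV. sm (var j) (x j i - x i j)) | x :: 'i \<Rightarrow> 'i \<Rightarrow> 'm. True}"

definition Tor1_vanishes :: "(('i::finite, 'k::comm_ring_1) mpoly \<Rightarrow> 'm::ab_group_add \<Rightarrow> 'm) \<Rightarrow> bool" where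
  "Tor1_vanishes sm \<longleftrightarrow> koszul_cycles1 sm \<subseteq> koszul_boundaries1 sm"

text \<open>Kernel of the localisation map M \<rightarrow> S^{-1}M: m/1 = 0 iff s m = 0 for some s \<in> S.\<close>
definition loc_kernel :: "(('i, 'k::comm_ring_1) mpoly \<Rightarrow> 'm::ab_group_add \<Rightarrow> 'm) \<Rightarrow> ('i, 'k) mpoly set \<Rightarrow> 'm set" where
  "loc_kernel sm S = {m. \<exists>s\<in>S. sm s m = 0}"

end

theory Submission
  imports Defs
begin


locale gm =
  fixes sm :: "('i::finite, 'k::comm_ring_1) mpoly \<Rightarrow> 'm::ab_group_add \<Rightarrow> 'm"
    and Md :: "int \<Rightarrow> 'm set"
  assumes gr: "is_graded_module sm Md"
begin

lemma modl: "is_module sm" using gr unfolding is_graded_module_def by blast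

lemma sm_addl: "sm (a + b) m = sm a m + sm b m" using modl unfolding is_module_def by blast
lemma sm_addr: "sm a (m + n) = sm a m + sm a n" using modl unfolding is_module_def by blast
lemma sm_mult: "sm (a * b) m = sm a (sm b m)" using modl unfolding is_module_def by blast
lemma sm_one: "sm 1 m = m" using modl unfolding is_module_def by blast

lemma sm_zerol: "sm 0 m = 0"
  using sm_addl[of 0 0 m] by simp
lemma sm_zeror: "sm a 0 = 0"
  using sm_addr[of a 0 0] by simp
lemma sm_minusr: "sm a (- m) = - sm a m"
proof -
  have "sm a m + sm a (-m) = 0" using sm_addr[of a m "-m"] sm_zeror by simp
  from minus_unique[OF this] show ?thesis by simp
qed
lemma sm_diffr: "sm a (m - n) = sm a m - sm a n"
  using sm_addr[of a m "-n"] sm_minusr by simp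
lemma sm_minusl: "sm (- a) m = - sm a m"
proof -
  have "sm a m + sm (-a) m = 0" using sm_addl[of a "-a" m] sm_zerol by simp
  from minus_unique[OF this] show ?thesis by simp
qed
lemma sm_diffl: "sm (a - b) m = sm a m - sm b m"
  using sm_addl[of a "-b" m] sm_minusl by simp
lemma sm_sumr: "sm a (\<Sum>x\<in>X. f x) = (\<Sum>x\<in>X. sm a (f x))"
  by (induction X rule: infinite_finite_induct) (auto simp: sm_zeror sm_addr)
lemma sm_suml: "sm (\<Sum>x\<in>X. f x) m = (\<Sum>x\<in>X. sm (f x) m)"
  by (induction X rule: infinite_finite_induct) (auto simp: sm_zerol sm_addl)
lemma sm_comm: "sm a (sm b m) = sm b (sm a m)"
  by (metis sm_mult mult.commute)

lemma Md_zero: "0 \<in> Md n" using gr unfolding is_graded_module_def by blast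
lemma Md_diff: "x \<in> Md n \<Longrightarrow> y \<in> Md n \<Longrightarrow> x - y \<in> Md n"
  using gr unfolding is_graded_module_def by blast
lemma Md_minus: "x \<in> Md n \<Longrightarrow> - x \<in> Md n"
  using Md_diff[of 0 n x] Md_zero by simp
lemma Md_add: "x \<in> Md n \<Longrightarrow> y \<in> Md n \<Longrightarrow> x + y \<in> Md n"
  using Md_diff[of x n "-y"] Md_minus by simp
lemma Md_sum: "(\<And>x. x \<in> X \<Longrightarrow> f x \<in> Md n) \<Longrightarrow> (\<Sum>x\<in>X. f x) \<in> Md n"
  by (induction X rule: infinite_finite_induct) (auto simp: Md_zero Md_add)
lemma Md_single: "x \<in> Md n \<Longrightarrow> sm (Poly_Mapping.single mu c) x \<in> Md (n + 2 * int (mdeg mu))"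
  using gr unfolding is_graded_module_def by blast

lemma decomp_all: "\<forall>m. \<exists>!f :: int \<Rightarrow> 'm. finite {n. f n \<noteq> 0} \<and> (\<forall>n. f n \<in> Md n) \<and>
            m = (\<Sum>n\<in>{n. f n \<noteq> 0}. f n)"
  using gr unfolding is_graded_module_def apply (elim conjE) apply assumption done

lemma decomp_ex1: "\<exists>!f :: int \<Rightarrow> 'm. finite {n. f n \<noteq> 0} \<and> (\<forall>n. f n \<in> Md n) \<and>
            m = (\<Sum>n\<in>{n. f n \<noteq> 0}. f n)"
  by (rule spec[OF decomp_all])

definition comp :: "'m \<Rightarrow> int \<Rightarrow> 'm" where
  "comp m = (THE f. finite {n. f n \<noteq> 0} \<and> (\<forall>n. f n \<in> Md n) \<and> m = (\<Sum>n\<in>{n. f n \<noteq> 0}. f n))"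

lemma comp_props: "finite {n. comp m n \<noteq> 0} \<and> (\<forall>n. comp m n \<in> Md n) \<and>
    m = (\<Sum>n\<in>{n. comp m n \<noteq> 0}. comp m n)"
  unfolding comp_def by (rule theI'[OF decomp_ex1])

lemma comp_Md: "comp m n \<in> Md n" using comp_props by blast

lemma comp_unique:
  assumes "finite F" "\<And>n. g n \<in> Md n" "\<And>n. n \<notin> F \<Longrightarrow> g n = 0" "m = (\<Sum>n\<in>F. g n)"
  shows "comp m = g"
proof -
  have sub: "{n. g n \<noteq> 0} \<subseteq> F" using assms(3) by blast
  have fin: "finite {n. g n \<noteq> 0}" using sub assms(1) finite_subset by blast
  have "(\<Sum>n\<in>F. g n) = (\<Sum>n\<in>{n. g n \<noteq> 0}. g n)"
    by (rule sum.mono_neutral_right[OF assms(1) sub]) auto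
  then have "finite {n. g n \<noteq> 0} \<and> (\<forall>n. g n \<in> Md n) \<and> m = (\<Sum>n\<in>{n. g n \<noteq> 0}. g n)"
    using fin assms by auto
  then show ?thesis unfolding comp_def by (rule the1_equality[OF decomp_ex1])
qed

lemma comp_sum_all:
  assumes "finite F" "{n. comp m n \<noteq> 0} \<subseteq> F"
  shows "m = (\<Sum>n\<in>F. comp m n)"
proof -
  have "(\<Sum>n\<in>F. comp m n) = (\<Sum>n\<in>{n. comp m n \<noteq> 0}. comp m n)"
    by (rule sum.mono_neutral_right[OF assms(1) assms(2)]) auto
  then show ?thesis using comp_props by metis
qed

lemma comp_homog:
  assumes "x \<in> Md n"
  shows "comp x = (\<lambda>k. if k = n then x else 0)"
  by (rule comp_unique[of "{n}"]) (auto simp: assms Md_zero)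

lemma comp_homog_eq: "x \<in> Md n \<Longrightarrow> comp x n = x"
  using comp_homog by simp

lemma comp_op:
  assumes add: "\<And>a b. \<phi> (a + b) = \<phi> a + \<phi> b"
    and hom: "\<And>k y. y \<in> Md k \<Longrightarrow> \<phi> y \<in> Md (k + d)"
  shows "comp (\<phi> x) (n + d) = \<phi> (comp x n)"
proof -
  have z: "\<phi> 0 = 0" using add[of 0 0] by simp
  have phisum: "\<phi> (\<Sum>k\<in>X. f k) = (\<Sum>k\<in>X. \<phi> (f k))" for X and f :: "int \<Rightarrow> 'm"
    by (induction X rule: infinite_finite_induct) (auto simp: z add)
  define F where "F = {n. comp x n \<noteq> 0}"
  have fF: "finite F" using comp_props F_def by blast
  define g where "g k = \<phi> (comp x (k - d))" for k
  have "comp (\<phi> x) = g"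
  proof (rule comp_unique[of "(\<lambda>k. k + d) ` F"])
    show "finite ((\<lambda>k. k + d) ` F)" using fF by simp
    show "g k \<in> Md k" for k using hom[OF comp_Md[of x "k - d"]] g_def by simp
    show "g k = 0" if "k \<notin> (\<lambda>k. k + d) ` F" for k
    proof -
      have "k - d \<notin> F" using that by force
      then show ?thesis unfolding g_def F_def using z by simp
    qed
    have "(\<Sum>k\<in>(\<lambda>k. k + d) ` F. g k) = (\<Sum>k\<in>F. g (k + d))"
      by (rule sum.reindex_cong[where l="\<lambda>k. k + d"]) (auto simp: inj_on_def)
    also have "\<dots> = \<phi> (\<Sum>k\<in>F. comp x k)" by (simp add: g_def phisum)
    also have "\<dots> = \<phi> x" using comp_props[of x] F_def by metis
    finally show "\<phi> x = (\<Sum>k\<in>(\<lambda>k. k + d) ` F. g k)" by simp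
  qed
  then show ?thesis by (simp add: g_def)
qed

lemma comp_add: "comp (x + y) n = comp x n + comp y n"
proof -
  define F where "F = {n. comp x n \<noteq> 0} \<union> {n. comp y n \<noteq> 0}"
  have fF: "finite F" using comp_props F_def by auto
  have "comp (x + y) = (\<lambda>n. comp x n + comp y n)"
  proof (rule comp_unique[OF fF])
    show "comp x n + comp y n \<in> Md n" for n using comp_Md Md_add by blast
    show "n \<notin> F \<Longrightarrow> comp x n + comp y n = 0" for n using F_def by auto
    show "x + y = (\<Sum>n\<in>F. comp x n + comp y n)"
      using comp_sum_all[OF fF, of x] comp_sum_all[OF fF, of y] F_def
      by (simp add: sum.distrib)
  qed
  then show ?thesis by simp
qed

lemma comp_zero: "comp 0 n = 0"
  using comp_add[of 0 0 n] by simp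

lemma comp_minus: "comp (- x) n = - comp x n"
proof -
  have "comp x n + comp (-x) n = 0" using comp_add[of x "-x" n] comp_zero by simp
  from minus_unique[OF this] show ?thesis by simp
qed

lemma comp_diff: "comp (x - y) n = comp x n - comp y n"
  using comp_add[of x "-y" n] comp_minus by simp

lemma comp_sum: "comp (\<Sum>j\<in>X. f j) n = (\<Sum>j\<in>X. comp (f j) n)"
  by (induction X rule: infinite_finite_induct) (auto simp: comp_zero comp_add)

lemma comp_zero_all: "(\<And>n. comp x n = 0) \<Longrightarrow> x = 0"
  using comp_props[of x] by simp

end



lemma bb_induct:
  fixes n0 :: int
  assumes base: "\<And>n. n < n0 \<Longrightarrow> P n" and step: "\<And>n. P (n - 2) \<Longrightarrow> P n"
  shows "P n"
proof -
  have "\<forall>n. nat (n - n0) < N \<longrightarrow> P n" for N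
  proof (induction N)
    case 0 then show ?case by simp
  next
    case (Suc N)
    show ?case
    proof (intro allI impI)
      fix n assume h: "nat (n - n0) < Suc N"
      show "P n"
      proof (cases "n < n0")
        case True then show ?thesis by (rule base)
      next
        case False
        have "P (n - 2)"
        proof (cases "n - 2 < n0")
          case True then show ?thesis by (rule base)
        next
          case False
          then have "nat (n - 2 - n0) < N" using h by linarith
          then show ?thesis using Suc.IH by blast
        qed
        then show ?thesis by (rule step)
      qed
    qed
  qed
  then show ?thesis by (meson lessI)
qed

context gm
begin

definition hom2 :: "('i, 'k) mpoly \<Rightarrow> bool" where
  "hom2 p \<longleftrightarrow> (\<forall>k y. y \<in> Md k \<longrightarrow> sm p y \<in> Md (k + 2))"

definition H1 :: "'j set \<Rightarrow> ('j \<Rightarrow> ('i, 'k) mpoly) \<Rightarrow> bool" where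
  "H1 J f \<longleftrightarrow> (\<forall>n m. (\<forall>j\<in>J. m j \<in> Md n) \<and> (\<Sum>j\<in>J. sm (f j) (m j)) = 0 \<longrightarrow>
     (\<exists>x. (\<forall>i j. x i j \<in> Md (n - 2)) \<and> (\<forall>i\<in>J. m i = (\<Sum>j\<in>J. sm (f j) (x j i - x i j)))))"

lemma H1_remove:
  assumes bb: "\<And>n. n < n0 \<Longrightarrow> Md n = {0}"
    and fin: "finite J" and aJ: "a \<notin> J" and H: "H1 (insert a J) f"
    and hom: "\<And>j. j \<in> insert a J \<Longrightarrow> hom2 (f j)"
  shows "H1 J f"
proof -
  let ?P = "\<lambda>n. \<forall>m. (\<forall>j\<in>J. m j \<in> Md n) \<and> (\<Sum>j\<in>J. sm (f j) (m j)) = 0 \<longrightarrow>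
     (\<exists>x. (\<forall>i j. x i j \<in> Md (n - 2)) \<and> (\<forall>i\<in>J. m i = (\<Sum>j\<in>J. sm (f j) (x j i - x i j))))"
  have base: "?P n" if "n < n0" for n :: int
    proof (intro allI impI)
      fix m assume "(\<forall>j\<in>J. m j \<in> Md n) \<and> (\<Sum>j\<in>J. sm (f j) (m j)) = 0"
      then have "\<forall>j\<in>J. m j = 0" using bb[OF that] by blast
      then show "\<exists>x. (\<forall>i j. x i j \<in> Md (n - 2)) \<and> (\<forall>i\<in>J. m i = (\<Sum>j\<in>J. sm (f j) (x j i - x i j)))"
        by (intro exI[of _ "\<lambda>_ _. 0"]) (simp add: Md_zero sm_zeror)
    qed
  have step: "?P n" if IH: "?P (n - 2)" for n :: int
    proof (intro allI impI)
      fix m assume hm: "(\<forall>j\<in>J. m j \<in> Md n) \<and> (\<Sum>j\<in>J. sm (f j) (m j)) = 0"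
      define m' where "m' = m(a := 0)"
      have m'J: "\<And>j. j \<in> J \<Longrightarrow> m' j = m j" using aJ m'_def by auto
      have "\<forall>j\<in>insert a J. m' j \<in> Md n" using hm m'J Md_zero m'_def by auto
      moreover have "(\<Sum>j\<in>insert a J. sm (f j) (m' j)) = 0"
        using hm m'J fin aJ by (simp add: m'_def sm_zeror)
      ultimately obtain x where x1: "\<forall>i j. x i j \<in> Md (n - 2)"
        and x2: "\<forall>i\<in>insert a J. m' i = (\<Sum>j\<in>insert a J. sm (f j) (x j i - x i j))"
        using H unfolding H1_def by blast
      define y where "y j = x j a - x a j" for j
      have "0 = (\<Sum>j\<in>insert a J. sm (f j) (x j a - x a j))" using x2 m'_def by simp
      also have "\<dots> = (\<Sum>j\<in>J. sm (f j) (y j))" using fin aJ by (simp add: y_def sm_zeror)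
      finally have ycyc: "(\<Sum>j\<in>J. sm (f j) (y j)) = 0" by simp
      have yMd: "\<forall>j\<in>J. y j \<in> Md (n - 2)" using x1 Md_diff y_def by simp
      obtain w where w1: "\<forall>i j. w i j \<in> Md (n - 2 - 2)"
        and w2: "\<forall>i\<in>J. y i = (\<Sum>j\<in>J. sm (f j) (w j i - w i j))"
        using IH ycyc yMd by blast
      define x' where "x' j i = x j i - sm (f a) (w j i)" for j i
      have "\<forall>i j. x' i j \<in> Md (n - 2)"
      proof (intro allI)
        fix i j
        have "sm (f a) (w i j) \<in> Md (n - 2 - 2 + 2)" using hom[of a] w1 unfolding hom2_def by blast
        then show "x' i j \<in> Md (n - 2)" using x1 Md_diff x'_def by simp
      qed
      moreover have "\<forall>i\<in>J. m i = (\<Sum>j\<in>J. sm (f j) (x' j i - x' i j))"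
      proof
        fix i assume iJ: "i \<in> J"
        have "m i = m' i" using m'J iJ by simp
        also have "\<dots> = (\<Sum>j\<in>insert a J. sm (f j) (x j i - x i j))" using x2 iJ by blast
        also have "\<dots> = sm (f a) (x a i - x i a) + (\<Sum>j\<in>J. sm (f j) (x j i - x i j))"
          using fin aJ by simp
        also have "sm (f a) (x a i - x i a) = - sm (f a) (y i)"
          by (simp add: y_def sm_minusr[symmetric])
        also have "sm (f a) (y i) = (\<Sum>j\<in>J. sm (f j) (sm (f a) (w j i) - sm (f a) (w i j)))"
          using w2 iJ by (simp add: sm_sumr sm_diffr sm_comm)
        also have "- (\<Sum>j\<in>J. sm (f j) (sm (f a) (w j i) - sm (f a) (w i j))) +
            (\<Sum>j\<in>J. sm (f j) (x j i - x i j)) = (\<Sum>j\<in>J. sm (f j) (x' j i - x' i j))"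
        proof -
          have "(\<Sum>j\<in>J. sm (f j) (x' j i - x' i j)) =
             (\<Sum>j\<in>J. sm (f j) (x j i - x i j) - sm (f j) (sm (f a) (w j i) - sm (f a) (w i j)))"
          proof (rule sum.cong[OF refl])
            fix j
            have e: "x' j i - x' i j = (x j i - x i j) - (sm (f a) (w j i) - sm (f a) (w i j))"
              by (simp add: x'_def algebra_simps)
            show "sm (f j) (x' j i - x' i j) = sm (f j) (x j i - x i j) - sm (f j) (sm (f a) (w j i) - sm (f a) (w i j))"
              unfolding e by (rule sm_diffr)
          qed
          also have "\<dots> = (\<Sum>j\<in>J. sm (f j) (x j i - x i j)) - (\<Sum>j\<in>J. sm (f j) (sm (f a) (w j i) - sm (f a) (w i j)))"
            by (rule sum_subtractf)
          finally show ?thesis by simp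
        qed
        finally show "m i = (\<Sum>j\<in>J. sm (f j) (x' j i - x' i j))" .
      qed
      ultimately show "\<exists>x. (\<forall>i j. x i j \<in> Md (n - 2)) \<and> (\<forall>i\<in>J. m i = (\<Sum>j\<in>J. sm (f j) (x j i - x i j)))"
        by blast
    qed
  have "?P n" for n using bb_induct[of n0 ?P, OF base step] by blast
  then show ?thesis unfolding H1_def by blast
qed

lemma H1_subset_aux:
  assumes bb: "\<And>n. n < n0 \<Longrightarrow> Md n = {0}" and finD: "finite D"
  shows "D \<inter> K = {} \<Longrightarrow> finite K \<Longrightarrow> H1 (K \<union> D) f \<Longrightarrow> (\<And>j. j \<in> K \<union> D \<Longrightarrow> hom2 (f j)) \<Longrightarrow> H1 K f"
  using finD
proof (induction D rule: finite_induct)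
  case empty then show ?case by simp
next
  case (insert d D)
  have "H1 (K \<union> D) f"
  proof (rule H1_remove[OF bb])
    show "finite (K \<union> D)" using insert by simp
    show "d \<notin> K \<union> D" using insert by auto
    show "H1 (insert d (K \<union> D)) f" using insert by simp
    show "\<And>j. j \<in> insert d (K \<union> D) \<Longrightarrow> hom2 (f j)" using insert by auto
  qed
  then show ?case using insert by auto
qed

lemma H1_subset:
  assumes bb: "\<And>n. n < n0 \<Longrightarrow> Md n = {0}" and fin: "finite J" and H: "H1 J f"
    and hom: "\<And>j. j \<in> J \<Longrightarrow> hom2 (f j)" and sub: "K \<subseteq> J"
  shows "H1 K f"
proof -
  have "K \<union> (J - K) = J" using sub by auto
  then show ?thesis
    using H1_subset_aux[OF bb, where D="J - K" and K=K and f=f] fin H hom finite_subset[OF sub fin] by auto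
qed

lemma nzd:
  assumes H: "H1 {l} f" and hl: "hom2 (f l)" and z: "sm (f l) m = 0"
  shows "m = 0"
proof -
  have homog: "y = 0" if "y \<in> Md n" "sm (f l) y = 0" for y n
  proof -
    have "(\<forall>j\<in>{l}. (\<lambda>_. y) j \<in> Md n) \<and> (\<Sum>j\<in>{l}. sm (f j) ((\<lambda>_. y) j)) = 0"
      using that by simp
    then obtain x where "\<forall>i\<in>{l}. y = (\<Sum>j\<in>{l}. sm (f j) (x j i - x i j))"
      using H unfolding H1_def apply - apply (drule spec[of _ n], drule spec[of _ "\<lambda>_. y"]) by auto
    then show ?thesis by (simp add: sm_zeror)
  qed
  have "comp m n = 0" for n
  proof -
    have "comp (sm (f l) m) (n + 2) = sm (f l) (comp m n)"
      by (rule comp_op) (use hl in \<open>auto simp: sm_addr hom2_def\<close>)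
    then have "sm (f l) (comp m n) = 0" using z comp_zero by simp
    then show ?thesis using homog comp_Md by blast
  qed
  then show ?thesis by (rule comp_zero_all)
qed

lemma mdeg_single: "mdeg (Poly_Mapping.single (i::'i) (1::nat)) = 1"
  unfolding mdeg_def by (simp add: lookup_single when_def)

lemma hom2_var: "hom2 (var i)"
  unfolding hom2_def var_def using Md_single[of _ _ "Poly_Mapping.single i 1" 1] mdeg_single by simp

lemma H1_var:
  assumes "Tor1_vanishes sm"
  shows "H1 (UNIV :: 'i set) var"
  unfolding H1_def
proof (intro allI impI)
  fix n and m :: "'i \<Rightarrow> 'm"
  assume hm: "(\<forall>j\<in>UNIV. m j \<in> Md n) \<and> (\<Sum>j\<in>UNIV. sm (var j) (m j)) = 0"
  then have "m \<in> koszul_boundaries1 sm" using assms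
    unfolding Tor1_vanishes_def koszul_cycles1_def by blast
  then obtain x where hx: "m = (\<lambda>i. \<Sum>j\<in>UNIV. sm (var j) (x j i - x i j))"
    unfolding koszul_boundaries1_def by blast
  define x' where "x' j i = comp (x j i) (n - 2)" for j i
  have "\<forall>i j. x' i j \<in> Md (n - 2)" using comp_Md x'_def by simp
  moreover have "m i = (\<Sum>j\<in>UNIV. sm (var j) (x' j i - x' i j))" for i
  proof -
    have "m i = comp (m i) n" using hm comp_homog_eq by simp
    also have "\<dots> = (\<Sum>j\<in>UNIV. comp (sm (var j) (x j i - x i j)) (n - 2 + 2))"
      by (subst hx) (simp add: comp_sum)
    also have "\<dots> = (\<Sum>j\<in>UNIV. sm (var j) (comp (x j i - x i j) (n - 2)))"
      by (rule sum.cong[OF refl], rule comp_op) (use hom2_var in \<open>auto simp: sm_addr hom2_def\<close>)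
    also have "\<dots> = (\<Sum>j\<in>UNIV. sm (var j) (x' j i - x' i j))"
      by (simp add: x'_def comp_diff)
    finally show ?thesis .
  qed
  ultimately show "\<exists>x. (\<forall>i j. x i j \<in> Md (n - 2)) \<and> (\<forall>i\<in>UNIV. m i = (\<Sum>j\<in>UNIV. sm (var j) (x j i - x i j)))"
    by blast
qed

end


definition coef :: "('i, 'k::comm_ring_1) mpoly \<Rightarrow> 'i \<Rightarrow> 'k" where
  "coef p i = Poly_Mapping.lookup p (Poly_Mapping.single i 1)"

lemma const_var: "const c * var i = Poly_Mapping.single (Poly_Mapping.single i 1) c"
  unfolding const_def var_def by (simp add: mult_single)

lemma const_mult: "const a * const b = const (a * b)"
  unfolding const_def by (simp add: mult_single)
lemma const_one: "const 1 = 1" unfolding const_def by simp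
lemma const_zero: "const 0 = 0" unfolding const_def by simp
lemma const_add: "const (a + b) = const a + const b" unfolding const_def by (simp add: single_add)
lemma const_sum: "const (\<Sum>x\<in>X. f x) = (\<Sum>x\<in>X. const (f x))"
  by (induction X rule: infinite_finite_induct) (auto simp: const_zero const_add)

lemma single_eq_iff: "(Poly_Mapping.single (i::'i) (1::nat) = Poly_Mapping.single j 1) \<longleftrightarrow> i = j"
proof
  assume "Poly_Mapping.single (i::'i) (1::nat) = Poly_Mapping.single j 1"
  then have "Poly_Mapping.lookup (Poly_Mapping.single i (1::nat)) j = Poly_Mapping.lookup (Poly_Mapping.single j 1) j" by simp
  then show "i = j" by (auto simp: lookup_single when_def split: if_splits)
qed simp

lemma lin_expand:
  fixes p :: "('i::finite, 'k::comm_ring_1) mpoly"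
  assumes "linear_elem p"
  shows "p = (\<Sum>i\<in>UNIV. const (coef p i) * var i)"
proof (rule poly_mapping_eqI)
  fix mu
  have r: "Poly_Mapping.lookup (\<Sum>i\<in>UNIV. const (coef p i) * var i) mu =
      (\<Sum>i\<in>UNIV. if Poly_Mapping.single i 1 = mu then coef p i else 0)"
    by (simp add: lookup_sum const_var lookup_single when_def)
  show "Poly_Mapping.lookup p mu = Poly_Mapping.lookup (\<Sum>i\<in>UNIV. const (coef p i) * var i) mu"
  proof (cases "\<exists>i. mu = Poly_Mapping.single i 1")
    case True
    then obtain i0 where i0: "mu = Poly_Mapping.single i0 1" by blast
    have "(\<Sum>i\<in>UNIV. if Poly_Mapping.single i 1 = mu then coef p i else 0) =
        (\<Sum>i\<in>UNIV. if i = i0 then coef p i else 0)"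
      by (rule sum.cong[OF refl]) (simp only: i0 single_eq_iff)
    also have "\<dots> = coef p i0" by simp
    finally show ?thesis using r i0 by (simp add: coef_def)
  next
    case False
    then have "Poly_Mapping.lookup p mu = 0" using assms unfolding linear_elem_def by blast
    moreover have "(\<Sum>i\<in>UNIV. if Poly_Mapping.single i 1 = mu then coef p i else 0) = 0"
      by (rule sum.neutral) (use False in auto)
    ultimately show ?thesis using r by simp
  qed
qed

lemma linear_var: "linear_elem (var i :: ('i, 'k::comm_ring_1) mpoly)"
  unfolding linear_elem_def var_def by (auto simp: lookup_single when_def)

lemma basis_all:
  assumes "is_basis_A2 B"
  shows "\<forall>p. linear_elem p \<longrightarrow>
        (\<exists>!c :: ('i, 'k::comm_ring_1) mpoly \<Rightarrow> 'k. {b. c b \<noteq> 0} \<subseteq> B \<and> finite {b. c b \<noteq> 0} \<and>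
              p = (\<Sum>b\<in>{b. c b \<noteq> 0}. const (c b) * b))"
  using assms unfolding is_basis_A2_def by (rule conjunct2)

lemma basis_ex1:
  assumes "is_basis_A2 B" "linear_elem p"
  shows "\<exists>!c :: ('i, 'k::comm_ring_1) mpoly \<Rightarrow> 'k. {b. c b \<noteq> 0} \<subseteq> B \<and> finite {b. c b \<noteq> 0} \<and>
              p = (\<Sum>b\<in>{b. c b \<noteq> 0}. const (c b) * b)"
proof -
  from basis_all[OF assms(1)] have "linear_elem p \<longrightarrow> (\<exists>!c :: ('i, 'k::comm_ring_1) mpoly \<Rightarrow> 'k. {b. c b \<noteq> 0} \<subseteq> B \<and> finite {b. c b \<noteq> 0} \<and>
              p = (\<Sum>b\<in>{b. c b \<noteq> 0}. const (c b) * b))" by (rule spec)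
  then show ?thesis using assms(2) by (rule mp)
qed

lemma rep_unique:
  fixes B :: "('i::finite, 'k::comm_ring_1) mpoly set"
  assumes bas: "is_basis_A2 B" and fG: "finite G" and GB: "G \<subseteq> B" and lin: "linear_elem p"
    and hc: "p = (\<Sum>b\<in>G. const (c b) * b)" and hd: "p = (\<Sum>b\<in>G. const (d b) * b)"
    and bG: "b \<in> G"
  shows "c b = d b"
proof -
  define P where "P = (\<lambda>e :: ('i, 'k) mpoly \<Rightarrow> 'k. {b. e b \<noteq> 0} \<subseteq> B \<and> finite {b. e b \<noteq> 0} \<and>
              p = (\<Sum>b\<in>{b. e b \<noteq> 0}. const (e b) * b))"
  have ex1: "\<exists>!e. P e" unfolding P_def by (rule basis_ex1[OF bas lin])
  have U: "Uniq P" using iffD1[OF ex1_iff_ex_Uniq ex1] by (rule conjunct2)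
  define c' where "c' = (\<lambda>b. if b \<in> G then c b else 0)"
  define d' where "d' = (\<lambda>b. if b \<in> G then d b else 0)"
  have good: "{b. e' b \<noteq> 0} \<subseteq> B \<and> finite {b. e' b \<noteq> 0} \<and> p = (\<Sum>b\<in>{b. e' b \<noteq> 0}. const (e' b) * b)"
    if he: "p = (\<Sum>b\<in>G. const (e b) * b)" and e'def: "e' = (\<lambda>b. if b \<in> G then e b else 0)" for e e'
  proof -
    have sub: "{b. e' b \<noteq> 0} \<subseteq> G" using e'def by auto
    have "(\<Sum>b\<in>G. const (e' b) * b) = (\<Sum>b\<in>{b. e' b \<noteq> 0}. const (e' b) * b)"
      by (rule sum.mono_neutral_right[OF fG sub]) (auto simp: const_zero)
    moreover have "(\<Sum>b\<in>G. const (e' b) * b) = (\<Sum>b\<in>G. const (e b) * b)"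
      using e'def by simp
    ultimately have "p = (\<Sum>b\<in>{b. e' b \<noteq> 0}. const (e' b) * b)" using he by simp
    moreover have "{b. e' b \<noteq> 0} \<subseteq> B" using sub GB by blast
    moreover have "finite {b. e' b \<noteq> 0}" using finite_subset[OF sub fG] .
    ultimately show ?thesis by blast
  qed
  have "c' = d'"
    by (rule Uniq_D[OF U]) (unfold P_def, (rule good[OF hc c'_def] good[OF hd d'_def])+)
  then have "c' b = d' b" by simp
  then show ?thesis using bG c'_def d'_def by simp
qed

locale basisB =
  fixes B :: "('i::finite, 'k::comm_ring_1) mpoly set"
  assumes bas: "is_basis_A2 B"
begin

lemma lin_B: "b \<in> B \<Longrightarrow> linear_elem b"
  using bas unfolding is_basis_A2_def by blast

definition Qc :: "'i \<Rightarrow> ('i, 'k) mpoly \<Rightarrow> 'k" where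
  "Qc i = (SOME c. {b. c b \<noteq> 0} \<subseteq> B \<and> finite {b. c b \<noteq> 0} \<and>
              var i = (\<Sum>b\<in>{b. c b \<noteq> 0}. const (c b) * b))"

lemma Qc_props: "{b. Qc i b \<noteq> 0} \<subseteq> B \<and> finite {b. Qc i b \<noteq> 0} \<and>
              var i = (\<Sum>b\<in>{b. Qc i b \<noteq> 0}. const (Qc i b) * b)"
proof -
  have "\<exists>c. {b. c b \<noteq> 0} \<subseteq> B \<and> finite {b. c b \<noteq> 0} \<and>
              var i = (\<Sum>b\<in>{b. c b \<noteq> 0}. const (c b) * b)"
    by (rule ex1_implies_ex[OF basis_ex1[OF bas linear_var]])
  then show ?thesis unfolding Qc_def by (rule someI_ex)
qed

definition F where "F = (\<Union>i. {b. Qc i b \<noteq> 0})"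

lemma F_fin: "finite F" unfolding F_def using Qc_props by auto
lemma F_B: "F \<subseteq> B" unfolding F_def using Qc_props by auto

lemma var_G:
  assumes "finite G" "F \<subseteq> G"
  shows "var i = (\<Sum>b\<in>G. const (Qc i b) * b)"
proof -
  have sub: "{b. Qc i b \<noteq> 0} \<subseteq> G" using assms(2) F_def by auto
  have "(\<Sum>b\<in>G. const (Qc i b) * b) = (\<Sum>b\<in>{b. Qc i b \<noteq> 0}. const (Qc i b) * b)"
    by (rule sum.mono_neutral_right[OF assms(1) sub]) (auto simp: const_zero)
  then show ?thesis using Qc_props by metis
qed

lemma lin_G:
  assumes "finite G" "F \<subseteq> G" "linear_elem p"
  shows "p = (\<Sum>b\<in>G. const (\<Sum>i\<in>UNIV. coef p i * Qc i b) * b)"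
proof -
  have "p = (\<Sum>i\<in>UNIV. const (coef p i) * var i)" by (rule lin_expand[OF assms(3)])
  also have "\<dots> = (\<Sum>i\<in>UNIV. const (coef p i) * (\<Sum>b\<in>G. const (Qc i b) * b))"
    using var_G[OF assms(1,2)] by simp
  also have "\<dots> = (\<Sum>i\<in>UNIV. \<Sum>b\<in>G. const (coef p i * Qc i b) * b)"
    by (simp add: sum_distrib_left const_mult[symmetric] mult.assoc)
  also have "\<dots> = (\<Sum>b\<in>G. \<Sum>i\<in>UNIV. const (coef p i * Qc i b) * b)"
    by (rule sum.swap)
  also have "\<dots> = (\<Sum>b\<in>G. const (\<Sum>i\<in>UNIV. coef p i * Qc i b) * b)"
    by (simp add: const_sum sum_distrib_right)
  finally show ?thesis .
qed

lemma delta_rep: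
  assumes "finite G" "b0 \<in> G"
  shows "b0 = (\<Sum>b\<in>G. const (if b = b0 then 1 else 0) * b)"
proof -
  have "(\<Sum>b\<in>G. const (if b = b0 then 1 else 0) * b) = (\<Sum>b\<in>G. if b = b0 then b else 0)"
    by (rule sum.cong) (auto simp: const_one const_zero)
  also have "\<dots> = b0" using assms by simp
  finally show ?thesis by simp
qed

lemma ident_G:
  assumes "finite G" "F \<subseteq> G" "G \<subseteq> B" "b0 \<in> G" "b \<in> G"
  shows "(\<Sum>i\<in>UNIV. coef b0 i * Qc i b) = (if b = b0 then 1 else 0)"
  by (rule rep_unique[OF bas assms(1,3) lin_B lin_G[OF assms(1,2) lin_B] delta_rep[OF assms(1,4)] assms(5)])
     (use assms in auto)

lemma B_F: "B = F"
proof
  show "B \<subseteq> F"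
  proof
    fix b0 assume b0B: "b0 \<in> B"
    let ?G = "insert b0 F"
    have "(\<Sum>i\<in>UNIV. coef b0 i * Qc i b0) = 1"
      using ident_G[of ?G b0 b0] F_fin F_B b0B by auto
    then obtain i where "Qc i b0 \<noteq> 0"
      by (metis (no_types, lifting) mult_zero_right sum.neutral zero_neq_one)
    then show "b0 \<in> F" unfolding F_def by blast
  qed
  show "F \<subseteq> B" by (rule F_B)
qed

lemma B_fin: "finite B" using B_F F_fin by simp

lemma ident: "b0 \<in> B \<Longrightarrow> b \<in> B \<Longrightarrow> (\<Sum>i\<in>UNIV. coef b0 i * Qc i b) = (if b = b0 then 1 else 0)"
  using ident_G[of B] B_fin B_F by auto

lemma var_B: "var i = (\<Sum>b\<in>B. const (Qc i b) * b)"
  using var_G[of B] B_fin B_F by auto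

end



context gm
begin

lemma mdeg_zero: "mdeg (0 :: 'i \<Rightarrow>\<^sub>0 nat) = 0"
  unfolding mdeg_def by simp

lemma sm_const_Md: "y \<in> Md k \<Longrightarrow> sm (const c) y \<in> Md k"
  using Md_single[of y k 0 c] mdeg_zero unfolding const_def by simp

lemma hom2_lin:
  assumes "linear_elem p"
  shows "hom2 p"
  unfolding hom2_def
proof (intro allI impI)
  fix k y assume y: "y \<in> Md k"
  have "sm p y = (\<Sum>i\<in>UNIV. sm (const (coef p i) * var i) y)"
    by (subst lin_expand[OF assms]) (simp add: sm_suml)
  also have "\<dots> \<in> Md (k + 2)"
    using hom2_var y unfolding hom2_def by (auto intro!: Md_sum sm_const_Md simp: sm_mult)
  finally show "sm p y \<in> Md (k + 2)" .
qed

lemma H1_basis: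
  assumes bas: "is_basis_A2 B" and Hv: "H1 (UNIV :: 'i set) var"
  shows "H1 B id"
proof -
  interpret basisB B by unfold_locales (rule bas)
  show ?thesis unfolding H1_def
  proof (intro allI impI)
    fix n and m :: "('i, 'k) mpoly \<Rightarrow> 'm"
    assume hm: "(\<forall>j\<in>B. m j \<in> Md n) \<and> (\<Sum>j\<in>B. sm (id j) (m j)) = 0"
    define y where "y i = (\<Sum>b\<in>B. sm (const (coef b i)) (m b))" for i
    have yMd: "\<forall>i\<in>UNIV. y i \<in> Md n"
      using hm by (auto simp: y_def intro!: Md_sum sm_const_Md)
    have "(\<Sum>i\<in>UNIV. sm (var i) (y i)) = (\<Sum>i\<in>UNIV. \<Sum>b\<in>B. sm (const (coef b i) * var i) (m b))"
      by (simp add: y_def sm_sumr sm_mult sm_comm)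
    also have "\<dots> = (\<Sum>b\<in>B. \<Sum>i\<in>UNIV. sm (const (coef b i) * var i) (m b))"
      by (rule sum.swap)
    also have "\<dots> = (\<Sum>b\<in>B. sm b (m b))"
    proof (rule sum.cong[OF refl])
      fix b assume "b \<in> B"
      then have "b = (\<Sum>i\<in>UNIV. const (coef b i) * var i)" using lin_expand lin_B by blast
      then show "(\<Sum>i\<in>UNIV. sm (const (coef b i) * var i) (m b)) = sm b (m b)"
        by (metis sm_suml)
    qed
    also have "\<dots> = 0" using hm by simp
    finally have ycyc: "(\<Sum>i\<in>UNIV. sm (var i) (y i)) = 0" .
    obtain x where x1: "\<forall>i j. x i j \<in> Md (n - 2)"
      and x2: "\<forall>i\<in>UNIV. y i = (\<Sum>j\<in>UNIV. sm (var j) (x j i - x i j))"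
      using Hv yMd ycyc unfolding H1_def by blast
    define x' where "x' b' b = (\<Sum>a\<in>UNIV. \<Sum>i\<in>UNIV. sm (const (Qc a b' * Qc i b)) (x a i))" for b' b
    have "\<forall>i j. x' i j \<in> Md (n - 2)"
      using x1 by (auto simp: x'_def intro!: Md_sum sm_const_Md)
    moreover have "\<forall>b\<in>B. m b = (\<Sum>b'\<in>B. sm (id b') (x' b' b - x' b b'))"
    proof
      fix b assume bB: "b \<in> B"
      have A: "m b = (\<Sum>i\<in>UNIV. sm (const (Qc i b)) (y i))"
      proof -
        have "(\<Sum>i\<in>UNIV. sm (const (Qc i b)) (y i)) =
            (\<Sum>i\<in>UNIV. \<Sum>b'\<in>B. sm (const (coef b' i * Qc i b)) (m b'))"
          by (simp add: y_def sm_sumr sm_mult[symmetric] const_mult mult.commute)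
        also have "\<dots> = (\<Sum>b'\<in>B. \<Sum>i\<in>UNIV. sm (const (coef b' i * Qc i b)) (m b'))"
          by (rule sum.swap)
        also have "\<dots> = (\<Sum>b'\<in>B. sm (const (\<Sum>i\<in>UNIV. coef b' i * Qc i b)) (m b'))"
          by (simp add: sm_suml const_sum)
        also have "\<dots> = (\<Sum>b'\<in>B. if b = b' then m b' else 0)"
          by (rule sum.cong[OF refl]) (simp add: ident bB const_one const_zero sm_one sm_zerol)
        also have "\<dots> = m b" using bB B_fin by simp
        finally show ?thesis by simp
      qed
      define z where "z a i = x a i - x i a" for a i
      have smv: "sm (var a) v = (\<Sum>b'\<in>B. sm b' (sm (const (Qc a b')) v))" for a v
        by (subst var_B) (simp add: sm_suml sm_mult sm_comm)
      have "(\<Sum>i\<in>UNIV. sm (const (Qc i b)) (y i)) =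
          (\<Sum>i\<in>UNIV. \<Sum>a\<in>UNIV. \<Sum>b'\<in>B. sm b' (sm (const (Qc a b' * Qc i b)) (z a i)))"
        using x2 apply (simp add: z_def[symmetric] smv sm_sumr sm_comm[of "const _"] sm_mult[symmetric] const_mult mult.commute)
        apply (simp add: const_mult[symmetric] ac_simps)
        done
      also have "\<dots> = (\<Sum>a\<in>UNIV. \<Sum>i\<in>UNIV. \<Sum>b'\<in>B. sm b' (sm (const (Qc a b' * Qc i b)) (z a i)))"
        by (rule sum.swap)
      also have "\<dots> = (\<Sum>a\<in>UNIV. \<Sum>b'\<in>B. \<Sum>i\<in>UNIV. sm b' (sm (const (Qc a b' * Qc i b)) (z a i)))"
        by (rule sum.cong[OF refl], rule sum.swap)
      also have "\<dots> = (\<Sum>b'\<in>B. \<Sum>a\<in>UNIV. \<Sum>i\<in>UNIV. sm b' (sm (const (Qc a b' * Qc i b)) (z a i)))"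
        by (rule sum.swap)
      also have "\<dots> = (\<Sum>b'\<in>B. sm b' (\<Sum>a\<in>UNIV. \<Sum>i\<in>UNIV. sm (const (Qc a b' * Qc i b)) (z a i)))"
        by (simp add: sm_sumr)
      also have "\<dots> = (\<Sum>b'\<in>B. sm (id b') (x' b' b - x' b b'))"
      proof (rule sum.cong[OF refl])
        fix b'
        have e: "x' b b' = (\<Sum>a\<in>UNIV. \<Sum>i\<in>UNIV. sm (const (Qc a b' * Qc i b)) (x i a))"
        proof -
          have "x' b b' = (\<Sum>i\<in>UNIV. \<Sum>a\<in>UNIV. sm (const (Qc a b * Qc i b')) (x a i))"
            unfolding x'_def by (rule sum.swap)
          also have "\<dots> = (\<Sum>i\<in>UNIV. \<Sum>a\<in>UNIV. sm (const (Qc i b' * Qc a b)) (x a i))"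
            by (simp add: mult.commute)
          finally show ?thesis .
        qed
        have "x' b' b - x' b b' = (\<Sum>a\<in>UNIV. \<Sum>i\<in>UNIV. sm (const (Qc a b' * Qc i b)) (x a i) - sm (const (Qc a b' * Qc i b)) (x i a))"
          by (subst e) (simp add: x'_def sum_subtractf)
        also have "\<dots> = (\<Sum>a\<in>UNIV. \<Sum>i\<in>UNIV. sm (const (Qc a b' * Qc i b)) (z a i))"
          by (simp add: z_def sm_diffr)
        finally show "sm b' (\<Sum>a\<in>UNIV. \<Sum>i\<in>UNIV. sm (const (Qc a b' * Qc i b)) (z a i)) = sm (id b') (x' b' b - x' b b')"
          by simp
      qed
      finally show "m b = (\<Sum>b'\<in>B. sm (id b') (x' b' b - x' b b'))" using A by simp
    qed
    ultimately show "\<exists>x. (\<forall>i j. x i j \<in> Md (n - 2)) \<and> (\<forall>i\<in>B. m i = (\<Sum>j\<in>B. sm (id j) (x j i - x i j)))"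
      by blast
  qed
qed

end


theorem lemma2p5:
  fixes sm :: "('i::finite, 'k::comm_ring_1) mpoly \<Rightarrow> 'm::ab_group_add \<Rightarrow> 'm"
    and Md :: "int \<Rightarrow> 'm set"
  assumes "is_graded_module sm Md"
    and "bounded_below Md"
    and "Tor1_vanishes sm"
  shows "loc_kernel sm (S_set :: ('i, 'k) mpoly set) = {0}"
proof -
  interpret gm sm Md by unfold_locales (rule assms(1))
  obtain n0 where bb0: "\<forall>n<n0. Md n = {0}" using assms(2) unfolding bounded_below_def by blast
  then have bb: "\<And>n. n < n0 \<Longrightarrow> Md n = {0}" by blast
  have Hv: "H1 (UNIV :: 'i set) var" by (rule H1_var[OF assms(3)])
  have nz: "m = 0" if el: "extends_to_basis l" and z: "sm l m = 0" for l :: "('i, 'k) mpoly" and m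
  proof -
    obtain B where bas: "is_basis_A2 B" and lB: "l \<in> B" using el unfolding extends_to_basis_def by blast
    interpret basisB B by unfold_locales (rule bas)
    have HB: "H1 B id" by (rule H1_basis[OF bas Hv])
    have hom: "\<And>j. j \<in> B \<Longrightarrow> hom2 (id j)" using hom2_lin lin_B by simp
    have lsub: "{l} \<subseteq> B" using lB by blast
    have "H1 {l} id" by (rule H1_subset[OF bb B_fin HB hom lsub])
    then show ?thesis using nzd[of l id m] hom lB z by simp
  qed
  have nzS: "m = 0" if "set ls \<subseteq> {l. extends_to_basis l}" "sm (prod_list ls) m = 0" for ls m
    using that
  proof (induction ls arbitrary: m)
    case Nil then show ?case by (simp add: sm_one)
  next
    case (Cons l ls)
    have "sm l (sm (prod_list ls) m) = 0" using Cons.prems by (simp add: sm_mult)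
    moreover have "extends_to_basis l" using Cons.prems by simp
    ultimately have "sm (prod_list ls) m = 0" using nz by blast
    then show ?case using Cons by simp
  qed
  show ?thesis
  proof
    show "loc_kernel sm S_set \<subseteq> {0}"
      unfolding loc_kernel_def S_set_def using nzS by blast
    have "(1 :: ('i, 'k) mpoly) \<in> S_set" unfolding S_set_def by (rule CollectI, rule exI[of _ "[]"]) simp
    then show "{0} \<subseteq> loc_kernel sm S_set"
      unfolding loc_kernel_def using sm_zeror by blast
  qed
qed

end
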